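(* Let $K$ be a finite field of characteristic $p$, let $d$ be an integer with $\gcd(d,|K|-1)=1$, and let $A,B$ be values assumed by $W_{K,d}$ on $K^\times$. If $A$ and $B$ are Galois conjugates over $\mathbb{Q}$, then $|\{a\in K^\times: W_{K,d}(a)=A\}|=|\{a\in K^\times: W_{K,d}(a)=B\}|$.
   Context: $\psi_K(x)=\exp(2\pi i\,\mathrm{Tr}_{K/\mathbb{F}_p}(x)/p)$ and $W_{K,d}(a)=\sum_{x\in K}\psi_K(x^d+ax)$, an element of $\mathbb{Q}(\zeta_p)$, $\zeta_p$ a primitive $p$th root of unity. *)

theory Defs
  imports "HOL-Analysis.Analysis" "HOL-Computational_Algebra.Computational_Algebra"
begin

text \<open>K is a finite field, modelled as a type 'a of class {field, finite};
  its characteristic is p = CHAR('a), and |K| = p^n with n the degree over F_p.\<close>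

definition ff_degree :: "'a::{field,finite} itself \<Rightarrow> nat" where
  "ff_degree T = (THE n. CARD('a) = CHAR('a) ^ n)"

definition abs_trace :: "'a::{field,finite} \<Rightarrow> 'a" where
  "abs_trace x = (\<Sum>i<ff_degree TYPE('a). x ^ (CHAR('a) ^ i))"

definition abs_trace_nat :: "'a::{field,finite} \<Rightarrow> nat" where
  "abs_trace_nat x = (THE t. t < CHAR('a) \<and> of_nat t = abs_trace x)"

definition psi_K :: "'a::{field,finite} \<Rightarrow> complex" where
  "psi_K x = exp (2 * of_real pi * \<i> * of_nat (abs_trace_nat x) / of_nat CHAR('a))"

text \<open>Weil sum W_{K,d}(a) = sum_{x in K} psi_K(x^d + a x); d is an integer,
  x^d is the integer power (for d < 0 this is x^(-|d|) with 0^d = 0).\<close>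
definition weil_sum :: "int \<Rightarrow> 'a::{field,finite} \<Rightarrow> complex" where
  "weil_sum d a = (\<Sum>x\<in>(UNIV::'a set). psi_K (x powi d + a * x))"

text \<open>A and B are Galois conjugates over Q: both are roots of one and the same
  irreducible polynomial with rational coefficients (i.e. they have the same
  minimal polynomial over Q).\<close>
definition galois_conjugate_rat :: "complex \<Rightarrow> complex \<Rightarrow> bool" where
  "galois_conjugate_rat A B \<longleftrightarrow>
     (\<exists>f :: rat poly. irreducible f \<and>
        poly (map_poly of_rat f) A = 0 \<and> poly (map_poly of_rat f) B = 0)"

end

theory Submission
  imports Defs "HOL-Number_Theory.Cong" "HOL-Computational_Algebra.Field_as_Ring"
begin


lemma ff_char_prime: "prime CHAR('a::{field,finite})"
  using prime_CHAR_semidom[where ?'a='a] finite_imp_CHAR_pos[where ?'a='a] by simp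

lemma ff_char_ge2: "CHAR('a::{field,finite}) \<ge> 2"
  using ff_char_prime[where ?'a='a] prime_ge_2_nat by blast

lemma ff_power_card: "(x::'a::{field,finite}) ^ CARD('a) = x"
proof (cases "x = 0")
  case False
  have "x * (\<Prod>y\<in>UNIV-{0}. x * y) = x * x ^ (card (UNIV :: 'a set) - 1) * \<Prod>(UNIV-{0})"
    by (simp add: prod.distrib mult_ac)
  also have "x * x ^ (card (UNIV :: 'a set) - 1) = x ^ Suc (card (UNIV :: 'a set) - 1)"
    by (subst power_Suc) auto
  also have "Suc (card (UNIV :: 'a set) - 1) = card (UNIV :: 'a set)"
    using finite_UNIV_card_ge_0[where ?'a = 'a] by simp
  also have "(\<Prod>y\<in>UNIV-{0}. x * y) = (\<Prod>y\<in>UNIV-{0}. y)"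
    by (rule prod.reindex_bij_witness[of _ "\<lambda>y. y / x" "\<lambda>y. x * y"]) (use False in auto)
  finally show ?thesis
    by simp
qed (use finite_UNIV_card_ge_0[where ?'a = 'a] in auto)

lemma ff_power_card_minus1: "(x::'a::{field,finite}) \<noteq> 0 \<Longrightarrow> x ^ (CARD('a) - 1) = 1"
proof -
  assume x: "x \<noteq> 0"
  have "x * x ^ (CARD('a) - 1) = x ^ Suc (CARD('a) - 1)" by (subst power_Suc) simp
  also have "Suc (CARD('a) - 1) = CARD('a)"
    using finite_UNIV_card_ge_0[where ?'a = 'a] by simp
  finally have "x * x ^ (CARD('a) - 1) = x * 1" using ff_power_card[of x] by simp
  thus ?thesis using x by simp
qed

lemma ff_of_nat_pow_char: "(of_nat k :: 'a::{field,finite}) ^ CHAR('a) = of_nat k"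
proof (induction k)
  case 0 thus ?case using ff_char_ge2[where ?'a='a] by (simp add: power_0_left)
next
  case (Suc k)
  have "(of_nat (Suc k) :: 'a) ^ CHAR('a) = (1 + of_nat k) ^ CHAR('a)" by simp
  also have "\<dots> = 1 ^ CHAR('a) + of_nat k ^ CHAR('a)"
    by (rule freshmans_dream) (auto simp: ff_char_prime)
  finally show ?case using Suc by simp
qed

lemma ff_of_nat_pow_char_pow: "(of_nat k :: 'a::{field,finite}) ^ (CHAR('a) ^ i) = of_nat k"
proof (induction i)
  case (Suc i)
  have "(of_nat k :: 'a) ^ (CHAR('a) ^ Suc i) = ((of_nat k :: 'a) ^ (CHAR('a) ^ i)) ^ CHAR('a)"
    by (simp add: power_mult[symmetric] mult.commute)
  thus ?case using Suc ff_of_nat_pow_char by simp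
qed simp

lemma ff_of_nat_mod: "(of_nat (n mod CHAR('a)) :: 'a::{field,finite}) = of_nat n"
  by (simp add: of_nat_eq_iff_cong_CHAR cong_def)

lemma ff_minus_one: "(of_nat (CHAR('a) - 1) :: 'a::{field,finite}) = -1"
proof -
  have "(of_nat (CHAR('a) - 1) :: 'a) + 1 = of_nat (Suc (CHAR('a) - 1))" by simp
  also have "Suc (CHAR('a) - 1) = CHAR('a)" using ff_char_ge2[where ?'a='a] by simp
  finally show ?thesis by (simp add: eq_neg_iff_add_eq_0)
qed

lemma ff_of_nat_inverse:
  assumes "(of_nat m :: 'a::{field,finite}) \<noteq> 0"
  shows "inverse (of_nat m :: 'a) = of_nat (m ^ (CHAR('a) - 2))"
proof -
  have e: "CHAR('a) = Suc (Suc (CHAR('a) - 2))" using ff_char_ge2[where ?'a='a] by simp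
  have "(of_nat m :: 'a) * (of_nat m * of_nat m ^ (CHAR('a) - 2)) = of_nat m * 1"
    using ff_of_nat_pow_char[of m, where ?'a='a] by (subst (asm) e) (simp add: algebra_simps)
  hence "(of_nat m :: 'a) * of_nat m ^ (CHAR('a) - 2) = 1" using assms by simp
  thus ?thesis by (simp add: inverse_unique of_nat_power)
qed

definition ff_closed :: "'a::{field,finite} set \<Rightarrow> bool" where
  "ff_closed S \<longleftrightarrow> 0 \<in> S \<and> (\<forall>x\<in>S. \<forall>y\<in>S. x + y \<in> S)"

lemma ff_closed_scal: "ff_closed S \<Longrightarrow> x \<in> S \<Longrightarrow> of_nat j * x \<in> S"
  by (induction j) (auto simp: ff_closed_def algebra_simps)

lemma ff_closed_step:
  fixes S :: "'a::{field,finite} set"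
  assumes S: "ff_closed S" and x: "x \<notin> S"
  defines "S' \<equiv> (\<lambda>(s,j). s + of_nat j * x) ` (S \<times> {..<CHAR('a)})"
  shows "ff_closed S'" "card S' = card S * CHAR('a)" "S \<subset> S'"
proof -
  let ?p = "CHAR('a)"
  have p2: "?p \<ge> 2" by (rule ff_char_ge2)
  show "ff_closed S'"
    unfolding ff_closed_def
  proof safe
    show "0 \<in> S'" unfolding S'_def using S p2
      by (intro image_eqI[of _ _ "(0,0)"]) (auto simp: ff_closed_def)
  next
    fix u v assume "u \<in> S'" "v \<in> S'"
    then obtain s j s' j' where u: "u = s + of_nat j * x" "s \<in> S" and v: "v = s' + of_nat j' * x" "s' \<in> S"
      unfolding S'_def by auto
    have "u + v = (s + s') + of_nat ((j + j') mod ?p) * x"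
      unfolding u v ff_of_nat_mod by (simp add: algebra_simps)
    moreover have "s + s' \<in> S" using S u v by (auto simp: ff_closed_def)
    moreover have "(j + j') mod ?p < ?p" using p2 by simp
    ultimately show "u + v \<in> S'" unfolding S'_def by (auto simp: image_iff)
  qed
  have inj: "inj_on (\<lambda>(s,j). s + of_nat j * x) (S \<times> {..<?p})"
  proof (rule inj_onI, clarify)
    fix s j s' j' assume s: "s \<in> S" "s' \<in> S" and j: "j < ?p" "j' < ?p"
      and eq: "s + of_nat j * x = s' + of_nat j' * x"
    have "j = j'"
    proof (rule ccontr)
      assume ne: "j \<noteq> j'"
      have "\<exists>a b c d. a \<in> S \<and> b \<in> S \<and> c < ?p \<and> d < ?p \<and> c < d \<and> a + of_nat c * x = b + of_nat d * x"
        using ne s j eq by (cases "j < j'") (metis, metis linorder_neqE_nat)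
      then obtain a b c d where abcd: "a \<in> S" "b \<in> S" "c < ?p" "d < ?p" "c < d"
        "a + of_nat c * x = b + of_nat d * x" by blast
      have "of_nat (d - c) * x = a - b" using abcd(5,6)
        by (simp add: of_nat_diff algebra_simps)
      moreover have nz: "(of_nat (d - c) :: 'a) \<noteq> 0"
      proof -
        have "\<not> ?p dvd (d - c)" using abcd by (auto dest: dvd_imp_le)
        thus ?thesis by (simp only: of_nat_eq_0_iff_char_dvd) simp
      qed
      moreover have m1: "(of_nat (?p - 1) :: 'a) * b = - b" using ff_minus_one[where ?'a='a] by simp
      ultimately have "x = inverse (of_nat (d - c)) * (a + of_nat (?p - 1) * b)"
        by (simp only: m1) (simp add: field_simps)
      also have "\<dots> = of_nat ((d - c) ^ (?p - 2)) * (a + of_nat (?p - 1) * b)"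
        using nz by (simp add: ff_of_nat_inverse)
      also have "\<dots> \<in> S"
      proof (rule ff_closed_scal[OF S])
        have "of_nat (?p - 1) * b \<in> S" by (rule ff_closed_scal[OF S abcd(2)])
        thus "a + of_nat (?p - 1) * b \<in> S" using S abcd(1) unfolding ff_closed_def by blast
      qed
      finally show False using x by simp
    qed
    thus "s = s' \<and> j = j'" using eq by simp
  qed
  show "card S' = card S * ?p"
    unfolding S'_def by (subst card_image[OF inj]) (simp add: card_cartesian_product)
  have "S \<subseteq> S'" unfolding S'_def using p2
    by (auto intro!: image_eqI[of _ _ "(_,0)"])
  moreover have "x \<in> S'" unfolding S'_def using p2 S
    by (intro image_eqI[of _ _ "(0,1)"]) (auto simp: ff_closed_def)
  ultimately show "S \<subset> S'" using x by auto
qed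

lemma ff_card_prime_power_aux:
  fixes S :: "'a::{field,finite} set"
  shows "ff_closed S \<Longrightarrow> card S = CHAR('a) ^ m \<Longrightarrow> \<exists>n. CARD('a) = CHAR('a) ^ n"
proof (induction "CARD('a) - card S" arbitrary: S m rule: less_induct)
  case (less S)
  show ?case
  proof (cases "S = UNIV")
    case True thus ?thesis using less by auto
  next
    case False
    then obtain x where x: "x \<notin> S" by auto
    define S' where "S' = (\<lambda>(s,j). s + of_nat j * x) ` (S \<times> {..<CHAR('a)})"
    note st = ff_closed_step[OF less(2) x, folded S'_def]
    have "card S < card S'" using st(3) by (intro psubset_card_mono) auto
    moreover have "card S' \<le> CARD('a)" by (rule card_mono) auto
    ultimately have "CARD('a) - card S' < CARD('a) - card S" by linarith
    moreover have "card S' = CHAR('a) ^ Suc m" using st(2) less(3) by simp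
    ultimately show ?thesis using less(1) st(1) by blast
  qed
qed

lemma ff_card_prime_power: "\<exists>n. CARD('a::{field,finite}) = CHAR('a) ^ n"
  by (rule ff_card_prime_power_aux[of "{0}" 0]) (auto simp: ff_closed_def)

lemma ff_degree: "CARD('a::{field,finite}) = CHAR('a) ^ ff_degree TYPE('a)"
proof -
  obtain n where n: "CARD('a) = CHAR('a) ^ n" using ff_card_prime_power by blast
  have "\<exists>!n. CARD('a) = CHAR('a) ^ n"
  proof (rule ex1I[of _ n])
    fix m assume "CARD('a) = CHAR('a) ^ m"
    with n have "CHAR('a) ^ m = CHAR('a) ^ n" by simp
    thus "m = n" using ff_char_ge2[where ?'a='a] by (simp add: power_inject_exp)
  qed (rule n)
  thus ?thesis unfolding ff_degree_def by (rule theI')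
qed

lemma ff_trace_frob: "abs_trace (x::'a::{field,finite}) ^ CHAR('a) = abs_trace x"
proof -
  let ?p = "CHAR('a)" and ?n = "ff_degree TYPE('a)"
  have "abs_trace x ^ ?p = (\<Sum>i<?n. (x ^ (?p ^ i)) ^ ?p)"
    unfolding abs_trace_def by (rule freshmans_dream_sum) (auto simp: ff_char_prime)
  also have "\<dots> = (\<Sum>i<?n. x ^ (?p ^ Suc i))"
    by (simp add: power_mult[symmetric] mult.commute)
  also have "\<dots> = (\<Sum>i<?n. x ^ (?p ^ i))"
  proof -
    have "(\<Sum>i<Suc ?n. x ^ (?p ^ i)) = x ^ (?p ^ 0) + (\<Sum>i<?n. x ^ (?p ^ Suc i))"
      by (rule sum.lessThan_Suc_shift)
    moreover have "(\<Sum>i<Suc ?n. x ^ (?p ^ i)) = (\<Sum>i<?n. x ^ (?p ^ i)) + x ^ (?p ^ ?n)"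
      by simp
    moreover have "x ^ (?p ^ ?n) = x" using ff_power_card[of x] ff_degree[where ?'a='a] by simp
    ultimately show ?thesis by simp
  qed
  finally show ?thesis unfolding abs_trace_def .
qed

lemma ff_frob_fixed:
  assumes "(y::'a::{field,finite}) ^ CHAR('a) = y"
  shows "\<exists>t<CHAR('a). y = of_nat t"
proof (rule ccontr)
  let ?p = "CHAR('a)"
  assume nex: "\<not> ?thesis"
  have p2: "?p \<ge> 2" by (rule ff_char_ge2)
  define P :: "'a poly" where "P = monom 1 ?p + [:0, -1:]"
  have degP: "degree P = ?p" unfolding P_def using p2
    by (subst degree_add_eq_left) (auto simp: degree_monom_eq)
  hence P0: "P \<noteq> 0" using p2 by auto
  have roots: "insert y (of_nat ` {..<?p}) \<subseteq> {x. poly P x = 0}"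
    using assms by (auto simp: P_def poly_monom ff_of_nat_pow_char)
  have inj: "inj_on (of_nat :: nat \<Rightarrow> 'a) {..<?p}"
    by (rule inj_onI) (simp add: of_nat_eq_iff_cong_CHAR cong_def)
  have "y \<notin> of_nat ` {..<?p}" using nex by auto
  hence c1: "card (insert y (of_nat ` {..<?p})) = Suc ?p"
    using card_image[OF inj] by simp
  have "Suc ?p \<le> card {x. poly P x = 0}"
    using card_mono[OF poly_roots_finite[OF P0] roots] c1 by simp
  also have "\<dots> \<le> ?p" using card_poly_roots_bound[OF P0] degP by simp
  finally show False by simp
qed

lemma ff_trace_nat:
  "abs_trace_nat (x::'a::{field,finite}) < CHAR('a) \<and> of_nat (abs_trace_nat x) = abs_trace x"
proof -
  obtain t where t: "t < CHAR('a)" "abs_trace x = of_nat t"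
    using ff_frob_fixed[OF ff_trace_frob[of x]] by blast
  have "\<exists>!t. t < CHAR('a) \<and> of_nat t = abs_trace x"
  proof (rule ex1I[of _ t])
    fix u assume "u < CHAR('a) \<and> of_nat u = abs_trace x"
    hence "[u = t] (mod CHAR('a))" "u < CHAR('a)" using t by (auto simp: of_nat_eq_iff_cong_CHAR)
    thus "u = t" using t by (simp add: cong_def)
  qed (use t in auto)
  thus ?thesis unfolding abs_trace_nat_def by (rule theI')
qed

lemma ff_trace_add: "abs_trace (x + y :: 'a::{field,finite}) = abs_trace x + abs_trace y"
  unfolding abs_trace_def
  by (simp add: freshmans_dream'[OF ff_char_prime refl] sum.distrib)

lemma ff_trace_scal: "abs_trace (of_nat k * y :: 'a::{field,finite}) = of_nat k * abs_trace y"
  unfolding abs_trace_def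
  by (simp add: power_mult_distrib ff_of_nat_pow_char_pow sum_distrib_left)



definition zeta :: "nat \<Rightarrow> complex" where
  "zeta p = exp (2 * of_real pi * \<i> / of_nat p)"

lemma zeta_pow: "zeta p ^ t = exp (2 * of_real pi * \<i> * of_nat t / of_nat p)"
proof -
  have "zeta p ^ t = exp (of_nat t * (2 * of_real pi * \<i> / of_nat p))"
    unfolding zeta_def by (rule exp_of_nat_mult[symmetric])
  thus ?thesis by (simp add: mult_ac)
qed

lemma zeta_p: "p > 0 \<Longrightarrow> zeta p ^ p = 1"
  unfolding zeta_pow by simp

lemma zeta_mod: "p > 0 \<Longrightarrow> zeta p ^ n = zeta p ^ (n mod p)"
proof -
  assume p: "p > 0"
  have "zeta p ^ n = zeta p ^ (p * (n div p) + n mod p)" by simp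
  also have "\<dots> = (zeta p ^ p) ^ (n div p) * zeta p ^ (n mod p)"
    by (simp only: power_add power_mult)
  finally show ?thesis using zeta_p[OF p] by simp
qed

lemma zeta_ne1: "p > 0 \<Longrightarrow> \<not> p dvd i \<Longrightarrow> zeta p ^ i \<noteq> 1"
proof
  assume p: "p > 0" and nd: "\<not> p dvd i" and e: "zeta p ^ i = 1"
  have "exp (2 * of_real pi * \<i> * of_nat i / of_nat p) = 1" using e by (simp only: zeta_pow)
  then obtain n :: int where n: "Im (2 * of_real pi * \<i> * of_nat i / of_nat p) = of_int (2 * n) * pi"
    unfolding exp_eq_1 by blast
  have "Im (2 * of_real pi * \<i> * of_nat i / of_nat p) = 2 * pi * real i / real p"
    by (simp add: Im_divide_of_nat)
  with n have "2 * pi * real i / real p = 2 * real_of_int n * pi" by simp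
  hence "real i = real_of_int n * real p" using p by (simp add: field_simps)
  hence "real_of_int (int i) = real_of_int (n * int p)" by simp
  hence "int i = n * int p" by (simp only: of_int_eq_iff)
  hence "int p dvd int i" by simp
  with nd show False by simp
qed

lemma zeta_sum:
  assumes p: "p > 1"
  shows "(\<Sum>k\<in>{1..<p}. zeta p ^ (i * k)) = (if p dvd i then of_nat (p - 1) else - 1)"
proof -
  have split: "(\<Sum>k<p. zeta p ^ (i * k)) = 1 + (\<Sum>k\<in>{1..<p}. zeta p ^ (i * k))"
  proof -
    have "{..<p} = insert 0 {1..<p}" using p by auto
    thus ?thesis by simp
  qed
  show ?thesis
  proof (cases "p dvd i")
    case True
    have "zeta p ^ (i * k) = 1" for k
      using True zeta_mod[of p "i*k"] p by simp
    thus ?thesis using True p by simp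
  next
    case False
    let ?w = "zeta p ^ i"
    have w1: "?w \<noteq> 1" using zeta_ne1[OF _ False] p by simp
    have "?w ^ p = (zeta p ^ p) ^ i" by (simp only: power_mult[symmetric] mult.commute)
    hence wp: "?w ^ p = 1" using zeta_p[of p] p by simp
    have "(\<Sum>k<p. zeta p ^ (i * k)) = (\<Sum>k<p. ?w ^ k)" by (simp add: power_mult)
    also have "\<dots> = 0" using w1 wp by (simp add: sum_gp_strict)
    finally show ?thesis using split False by (simp add: eq_neg_iff_add_eq_0 add.commute)
  qed
qed

lemma psi_zeta: "psi_K (z::'a::{field,finite}) = zeta CHAR('a) ^ abs_trace_nat z"
  unfolding psi_K_def zeta_pow ..

lemma psi_eq:
  assumes "abs_trace (z::'a::{field,finite}) = of_nat t"
  shows "psi_K z = zeta CHAR('a) ^ t"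
proof -
  have "of_nat (abs_trace_nat z) = (of_nat t :: 'a)" using ff_trace_nat[of z] assms by simp
  hence "abs_trace_nat z mod CHAR('a) = t mod CHAR('a)" by (simp add: of_nat_eq_iff_cong_CHAR cong_def)
  moreover have "CHAR('a) > 0" using ff_char_ge2[where ?'a='a] by simp
  ultimately show ?thesis unfolding psi_zeta using zeta_mod[of "CHAR('a)"] by metis
qed

lemma psi_scal: "psi_K (of_nat k * z :: 'a::{field,finite}) = psi_K z ^ k"
proof -
  have "abs_trace (of_nat k * z :: 'a) = of_nat (k * abs_trace_nat z)"
    using ff_trace_scal[of k z] ff_trace_nat[of z] by simp
  hence "psi_K (of_nat k * z) = zeta CHAR('a) ^ (k * abs_trace_nat z)" by (rule psi_eq)
  thus ?thesis by (simp add: psi_zeta power_mult[symmetric] mult.commute)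
qed



lemma ff_root_exists:
  fixes y :: "'a::{field,finite}"
  assumes "coprime d (int CARD('a) - 1)" "y \<noteq> 0"
  shows "\<exists>c. c \<noteq> 0 \<and> c powi d = y"
proof -
  obtain u v where uv: "u * d + v * (int CARD('a) - 1) = gcd d (int CARD('a) - 1)"
    using bezout_int by blast
  hence uv1: "u * d + v * (int CARD('a) - 1) = 1" using assms by simp
  have q1: "int CARD('a) - 1 = int (CARD('a) - 1)"
    using finite_UNIV_card_ge_0[where ?'a='a] by simp
  have y1: "y powi (int CARD('a) - 1) = 1"
    unfolding q1 power_int_of_nat using ff_power_card_minus1 assms by simp
  define c where "c = y powi u"
  have "c powi d = y powi (u * d)" by (simp add: c_def power_int_mult)
  also have "u * d = 1 + (int CARD('a) - 1) * (-v)" using uv1 by (simp add: algebra_simps)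
  also have "y powi (1 + (int CARD('a) - 1) * (-v)) = y powi 1 * y powi ((int CARD('a) - 1) * (-v))"
    by (rule power_int_add) (use assms in simp)
  also have "\<dots> = y * (y powi (int CARD('a) - 1)) powi (-v)"
    by (simp only: power_int_1_right power_int_mult)
  also have "\<dots> = y" using y1 by simp
  finally show ?thesis using assms by (intro exI[of _ c]) (simp add: c_def)
qed

lemma weil_transform:
  fixes a c :: "'a::{field,finite}"
  assumes k: "(of_nat k :: 'a) \<noteq> 0" and c: "c \<noteq> 0" "c powi d = inverse (of_nat k)"
  shows "(\<Sum>x\<in>UNIV. psi_K (x powi d + a * x) ^ k) = weil_sum d (of_nat k * c * a)"
proof -
  have "(\<Sum>x\<in>UNIV. psi_K (x powi d + a * x) ^ k) = (\<Sum>x\<in>UNIV. psi_K (of_nat k * (x powi d + a * x)))"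
    by (simp add: psi_scal)
  also have "\<dots> = (\<Sum>y\<in>UNIV. psi_K (of_nat k * ((c*y) powi d + a * (c*y))))"
    by (rule sum.reindex_bij_witness[of _ "\<lambda>y. c * y" "\<lambda>x. x / c"]) (use c in auto)
  also have "\<dots> = (\<Sum>y\<in>UNIV. psi_K (y powi d + (of_nat k * c * a) * y))"
  proof (rule sum.cong[OF refl])
    fix y :: 'a
    have "of_nat k * ((c*y) powi d + a*(c*y)) = (of_nat k * c powi d) * y powi d + (of_nat k*c*a)*y"
      by (simp add: power_int_mult_distrib algebra_simps)
    also have "of_nat k * c powi d = 1" using k c by simp
    finally show "psi_K (of_nat k * ((c*y) powi d + a * (c*y))) = psi_K (y powi d + (of_nat k * c * a) * y)"
      by simp
  qed
  finally show ?thesis unfolding weil_sum_def .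
qed

definition cyc :: "nat \<Rightarrow> (nat \<Rightarrow> complex) \<Rightarrow> bool" where
  "cyc p F \<longleftrightarrow> (\<exists>q. (\<forall>i. coeff q i \<in> \<rat>) \<and> (\<forall>k. F k = poly q (zeta p ^ k)))"

lemma cyc_const: "c \<in> \<rat> \<Longrightarrow> cyc p (\<lambda>k. c)"
  unfolding cyc_def by (intro exI[of _ "[:c:]"]) (auto simp: coeff_pCons split: nat.split)

lemma cyc_diff: "cyc p F \<Longrightarrow> cyc p G \<Longrightarrow> cyc p (\<lambda>k. F k - G k)"
  unfolding cyc_def
  by (elim exE conjE, rule_tac x="q - qa" in exI) (auto simp: Rats_diff)

lemma cyc_mult: "cyc p F \<Longrightarrow> cyc p G \<Longrightarrow> cyc p (\<lambda>k. F k * G k)"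
  unfolding cyc_def
  by (elim exE conjE, rule_tac x="q * qa" in exI) (auto simp: coeff_mult intro!: Rats_sum Rats_mult)

lemma coeff_linear_mult:
  "coeff ([:- x, 1:] * P) j = (case j of 0 \<Rightarrow> 0 | Suc i \<Rightarrow> coeff P i) - (x::complex) * coeff P j"
  by (simp add: coeff_pCons algebra_simps split: nat.split)

lemma cyc_coeff_linear_mult:
  assumes "cyc p e" "\<And>j. cyc p (\<lambda>k. coeff (P k) j)"
  shows "cyc p (\<lambda>k. coeff ([:- e k, 1:] * P k) j)"
proof -
  have "cyc p (\<lambda>k. (case j of 0 \<Rightarrow> 0 | Suc i \<Rightarrow> coeff (P k) i))"
    by (cases j) (auto intro: cyc_const assms)
  hence "cyc p (\<lambda>k. (case j of 0 \<Rightarrow> 0 | Suc i \<Rightarrow> coeff (P k) i) - e k * coeff (P k) j)"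
    by (intro cyc_diff cyc_mult assms)
  thus ?thesis by (simp only: coeff_linear_mult)
qed

lemma cyc_prod:
  assumes "finite S" "\<And>a. a \<in> S \<Longrightarrow> cyc p (\<lambda>k. e k a)"
  shows "cyc p (\<lambda>k. coeff (\<Prod>a\<in>S. [:- e k a, 1:]) j)"
  using assms
proof (induction S arbitrary: j rule: finite_induct)
  case empty
  show ?case by (simp add: coeff_pCons split: nat.split) (auto intro!: cyc_const)
next
  case (insert a S)
  have "cyc p (\<lambda>k. coeff ([:- e k a, 1:] * (\<Prod>a\<in>S. [:- e k a, 1:])) j)"
    by (rule cyc_coeff_linear_mult) (use insert in auto)
  thus ?case using insert by simp
qed

lemma cyc_rat:
  assumes p: "p > 1" and F: "cyc p F" and inv: "\<And>k. k \<in> {1..<p} \<Longrightarrow> F k = F 1"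
  shows "F 1 \<in> \<rat>"
proof -
  obtain q where q: "\<And>i. coeff q i \<in> \<rat>" "\<And>k. F k = poly q (zeta p ^ k)"
    using F unfolding cyc_def by blast
  have "(\<Sum>k\<in>{1..<p}. F k) = (\<Sum>k\<in>{1..<p}. F 1)"
    by (rule sum.cong[OF refl]) (rule inv)
  hence "of_nat (p - 1) * F 1 = (\<Sum>k\<in>{1..<p}. F k)"
    by simp
  also have "\<dots> = (\<Sum>k\<in>{1..<p}. \<Sum>i\<le>degree q. coeff q i * zeta p ^ (i * k))"
  proof (rule sum.cong[OF refl])
    fix k
    have "F k = (\<Sum>i\<le>degree q. coeff q i * (zeta p ^ k) ^ i)" by (simp only: q poly_altdef)
    also have "\<dots> = (\<Sum>i\<le>degree q. coeff q i * zeta p ^ (i * k))"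
      by (intro sum.cong refl) (simp only: power_mult[symmetric] mult.commute)
    finally show "F k = (\<Sum>i\<le>degree q. coeff q i * zeta p ^ (i * k))" .
  qed
  also have "\<dots> = (\<Sum>i\<le>degree q. coeff q i * (\<Sum>k\<in>{1..<p}. zeta p ^ (i * k)))"
    by (subst sum.swap) (simp add: sum_distrib_left)
  also have "\<dots> \<in> \<rat>"
  proof (rule Rats_sum)
    fix i show "coeff q i * (\<Sum>k\<in>{1..<p}. zeta p ^ (i * k)) \<in> \<rat>"
      using p by (intro Rats_mult q) (simp only: zeta_sum[OF p], simp)
  qed
  finally have "of_nat (p - 1) * F 1 \<in> \<rat>" .
  hence "(of_nat (p - 1) * F 1) / of_nat (p - 1) \<in> \<rat>" by (intro Rats_divide) auto
  thus ?thesis using p by simp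
qed



lemma order_prod_linear:
  fixes h :: "'b \<Rightarrow> complex"
  assumes "finite S"
  shows "order A (\<Prod>a\<in>S. [:- h a, 1:]) = card {a\<in>S. h a = A}"
  using assms
proof (induction S rule: finite_induct)
  case empty thus ?case by simp
next
  case (insert b S)
  have nz: "(\<Prod>a\<in>S. [:- h a, 1:]) \<noteq> 0" using insert by (simp add: prod_zero_iff)
  have "order A (\<Prod>a\<in>insert b S. [:- h a, 1:]) = order A ([:- h b, 1:] * (\<Prod>a\<in>S. [:- h a, 1:]))"
    using insert by simp
  also have "\<dots> = order A [:- h b, 1:] + order A (\<Prod>a\<in>S. [:- h a, 1:])"
  proof (rule order_mult)
    have "[:- h b, 1:] \<noteq> 0" by simp
    thus "[:- h b, 1:] * (\<Prod>a\<in>S. [:- h a, 1:]) \<noteq> 0" using nz by (simp only: mult_eq_0_iff) blast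
  qed
  also have "order A [:- h b, 1:] = (if h b = A then 1 else 0)"
  proof (cases "h b = A")
    case True thus ?thesis using order_power_n_n[of A 1] by simp
  next
    case False thus ?thesis by (simp add: order_0I)
  qed
  finally have o: "order A (\<Prod>a\<in>insert b S. [:- h a, 1:]) = (if h b = A then 1 else 0) + card {a\<in>S. h a = A}"
    using insert by simp
  have "{a\<in>insert b S. h a = A} = (if h b = A then insert b {a\<in>S. h a = A} else {a\<in>S. h a = A})"
    by auto
  thus ?case using o insert by simp
qed

lemma of_rat_poly_mult:
  "map_poly (of_rat::rat\<Rightarrow>complex) (P * Q) = map_poly of_rat P * map_poly of_rat Q"
  by (rule poly_eqI) (simp add: coeff_map_poly coeff_mult of_rat_sum of_rat_mult)

lemma of_rat_poly_add:
  "map_poly (of_rat::rat\<Rightarrow>complex) (P + Q) = map_poly of_rat P + map_poly of_rat Q"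
  by (rule poly_eqI) (simp add: coeff_map_poly of_rat_add)

lemma of_rat_poly_power:
  "map_poly (of_rat::rat\<Rightarrow>complex) (P ^ n) = map_poly of_rat P ^ n"
  by (induction n) (simp_all add: of_rat_poly_mult)

lemma of_rat_poly_pderiv:
  "map_poly (of_rat::rat\<Rightarrow>complex) (pderiv P) = pderiv (map_poly of_rat P)"
  by (rule poly_eqI) (simp add: coeff_map_poly coeff_pderiv of_rat_mult of_rat_add)

lemma of_rat_poly_nz: "P \<noteq> 0 \<Longrightarrow> map_poly (of_rat::rat\<Rightarrow>complex) P \<noteq> 0"
proof
  assume P: "P \<noteq> 0" and e: "map_poly (of_rat::rat\<Rightarrow>complex) P = 0"
  have "coeff P i = 0" for i
  proof -
    have "coeff (map_poly (of_rat::rat\<Rightarrow>complex) P) i = 0" using e by simp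
    thus ?thesis by (simp add: coeff_map_poly)
  qed
  hence "P = 0" by (intro poly_eqI) simp
  with P show False by simp
qed

lemma coprime_no_common_root:
  fixes f r :: "rat poly"
  assumes "coprime f r" "poly (map_poly (of_rat::rat\<Rightarrow>complex) f) A = 0"
  shows "poly (map_poly (of_rat::rat\<Rightarrow>complex) r) A \<noteq> 0"
proof
  assume r0: "poly (map_poly (of_rat::rat\<Rightarrow>complex) r) A = 0"
  define u where "u = fst (bezout_coefficients f r)"
  define v where "v = snd (bezout_coefficients f r)"
  have "u * f + v * r = 1"
    using bezout_coefficients_fst_snd[of f r] assms(1) unfolding u_def v_def by simp
  hence "poly (map_poly (of_rat::rat\<Rightarrow>complex) (u * f + v * r)) A = 1" by simp
  thus False using r0 assms(2) by (simp add: of_rat_poly_add of_rat_poly_mult)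
qed

lemma order_power_poly: "p \<noteq> 0 \<Longrightarrow> order a (p ^ n) = n * order a p"
  by (induction n) (simp_all add: order_mult)

lemma order_irred_root:
  fixes f :: "rat poly"
  assumes irr: "irreducible f" and root: "poly (map_poly (of_rat::rat\<Rightarrow>complex) f) A = 0"
  shows "order A (map_poly (of_rat::rat\<Rightarrow>complex) f) = 1"
proof -
  let ?F = "map_poly (of_rat::rat\<Rightarrow>complex) f"
  have f0: "f \<noteq> 0" using irr by auto
  have deg: "degree f \<noteq> 0" using irr f0 is_unit_iff_degree[OF f0] by (auto simp: irreducible_def)
  have F0: "?F \<noteq> 0" using f0 by (rule of_rat_poly_nz)
  have pd0: "pderiv f \<noteq> 0" using deg by (simp add: pderiv_eq_0_iff)
  have nd: "\<not> f dvd pderiv f"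
  proof
    assume "f dvd pderiv f"
    hence "degree f \<le> degree (pderiv f)" using pd0 by (rule dvd_imp_degree_le)
    thus False using deg by (simp add: degree_pderiv)
  qed
  have cop: "coprime f (pderiv f)"
    using irreducible_imp_prime_elem[OF irr] nd by (rule prime_elem_imp_coprime)
  have "poly (map_poly (of_rat::rat\<Rightarrow>complex) (pderiv f)) A \<noteq> 0"
    by (rule coprime_no_common_root[OF cop root])
  hence "order A (pderiv ?F) = 0" by (simp add: order_0I of_rat_poly_pderiv)
  moreover have "order A ?F = Suc (order A (pderiv ?F))" by (rule order_pderiv[OF F0 root])
  ultimately show ?thesis by simp
qed

lemma order_multiplicity:
  fixes f GQ :: "rat poly"
  assumes irr: "irreducible f" and root: "poly (map_poly (of_rat::rat\<Rightarrow>complex) f) A = 0"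
    and G0: "GQ \<noteq> 0"
  shows "order A (map_poly (of_rat::rat\<Rightarrow>complex) GQ) = multiplicity f GQ"
proof -
  obtain r where r: "GQ = f ^ multiplicity f GQ * r" "\<not> f dvd r" by (rule multiplicity_decompose') (use G0 irr in \<open>auto simp: irreducible_def\<close>)
  let ?m = "multiplicity f GQ"
  let ?h = "map_poly (of_rat::rat\<Rightarrow>complex)"
  have f0: "f \<noteq> 0" using irr by auto
  have r0: "r \<noteq> 0" using r G0 by auto
  have "?h GQ = ?h f ^ ?m * ?h r" by (subst r(1)) (simp add: of_rat_poly_mult of_rat_poly_power)
  hence "order A (?h GQ) = order A (?h f ^ ?m) + order A (?h r)"
    using f0 r0 by (simp add: order_mult of_rat_poly_nz)
  also have "order A (?h f ^ ?m) = ?m" using f0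
    by (simp add: order_power_poly order_irred_root[OF irr root] of_rat_poly_nz)
  also have "order A (?h r) = 0"
  proof (rule order_0I)
    have "coprime f r" using irreducible_imp_prime_elem[OF irr] r(2) by (rule prime_elem_imp_coprime)
    thus "poly (?h r) A \<noteq> 0" by (rule coprime_no_common_root[OF _ root])
  qed
  finally show ?thesis by simp
qed



theorem corollary5p2:
  fixes d :: int and A B :: complex
  assumes "coprime d (int CARD('a::{field,finite}) - 1)"
    and "A \<in> weil_sum d ` {a::'a. a \<noteq> 0}"
    and "B \<in> weil_sum d ` {a::'a. a \<noteq> 0}"
    and "galois_conjugate_rat A B"
  shows "card {a::'a. a \<noteq> 0 \<and> weil_sum d a = A} = card {a::'a. a \<noteq> 0 \<and> weil_sum d a = B}"
proof -
  let ?p = "CHAR('a)"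
  let ?S = "{a::'a. a \<noteq> 0}"
  have p1: "?p > 1" using ff_char_ge2[where ?'a='a] by simp
  define G where "G = (\<Prod>a\<in>?S. [:- weil_sum d a, 1:])"
  define wp where "wp a = (\<Sum>x\<in>(UNIV::'a set). monom (1::complex) (abs_trace_nat (x powi d + a * x)))" for a
  define E where "E k a = poly (wp a) (zeta ?p ^ k)" for k a
  have E_eq: "E k a = (\<Sum>x\<in>UNIV. psi_K (x powi d + a * x) ^ k)" for k a
  proof -
    have "E k a = (\<Sum>x\<in>UNIV. (zeta ?p ^ k) ^ abs_trace_nat (x powi d + a * x))"
      unfolding E_def wp_def by (simp add: poly_sum poly_monom)
    also have "\<dots> = (\<Sum>x\<in>UNIV. psi_K (x powi d + a * x) ^ k)"
      unfolding psi_zeta by (intro sum.cong refl) (metis power_mult mult.commute)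
    finally show ?thesis .
  qed
  have E1: "E 1 a = weil_sum d a" for a
    unfolding E_eq weil_sum_def by simp
  have cycE: "cyc ?p (\<lambda>k. E k a)" for a
    unfolding cyc_def
  proof (intro exI[of _ "wp a"] conjI allI)
    fix i show "coeff (wp a) i \<in> \<rat>"
      unfolding wp_def by (simp add: coeff_sum coeff_monom) (intro Rats_sum, simp)
  next
    fix k show "E k a = poly (wp a) (zeta ?p ^ k)" by (simp add: E_def)
  qed
  have Einv: "(\<Prod>a\<in>?S. [:- E k a, 1:]) = G" if k: "k \<in> {1..<?p}" for k
  proof -
    have kappa: "(of_nat k :: 'a) \<noteq> 0"
    proof -
      have "\<not> ?p dvd k" using k by (auto dest: dvd_imp_le)
      thus ?thesis by (simp only: of_nat_eq_0_iff_char_dvd) simp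
    qed
    obtain c :: 'a where c: "c \<noteq> 0" "c powi d = inverse (of_nat k)"
      using ff_root_exists[OF assms(1), of "inverse (of_nat k)"] kappa by auto
    have "E k a = weil_sum d (of_nat k * c * a)" for a
      unfolding E_eq by (rule weil_transform[OF kappa c])
    hence "(\<Prod>a\<in>?S. [:- E k a, 1:]) = (\<Prod>a\<in>?S. [:- weil_sum d (of_nat k * c * a), 1:])"
      by simp
    also have "\<dots> = G" unfolding G_def
      by (rule prod.reindex_bij_witness[of _ "\<lambda>b. b / (of_nat k * c)" "\<lambda>a. of_nat k * c * a"])
         (use kappa c in auto)
    finally show ?thesis .
  qed
  have ratG: "coeff G j \<in> \<rat>" for j
  proof -
    let ?F = "\<lambda>k. coeff (\<Prod>a\<in>?S. [:- E k a, 1:]) j"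
    have 1: "(1::nat) \<in> {1..<?p}" using p1 by simp
    have "?F 1 \<in> \<rat>"
    proof (rule cyc_rat[OF p1])
      show "cyc ?p ?F" by (rule cyc_prod) (auto intro: cycE)
      fix k assume "k \<in> {1..<?p}"
      thus "?F k = ?F 1" using Einv[OF 1] by (simp add: Einv)
    qed
    thus ?thesis using Einv[OF 1] by simp
  qed
  obtain GQ where GQ: "G = map_poly of_rat GQ" using ratG by (rule ratpolyE)
  have G0: "G \<noteq> 0" unfolding G_def by (simp add: prod_zero_iff)
  hence GQ0: "GQ \<noteq> 0" using GQ by auto
  obtain f :: "rat poly" where f: "irreducible f" "poly (map_poly of_rat f) A = 0"
    "poly (map_poly of_rat f) B = 0"
    using assms(4) unfolding galois_conjugate_rat_def by blast
  have cnt: "card {a::'a. a \<noteq> 0 \<and> weil_sum d a = C} = order C G" for C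
  proof -
    have "order C G = card {a\<in>?S. weil_sum d a = C}"
      unfolding G_def by (rule order_prod_linear) simp
    thus ?thesis by simp
  qed
  show ?thesis
    unfolding cnt GQ order_multiplicity[OF f(1) f(2) GQ0] order_multiplicity[OF f(1) f(3) GQ0] ..
qed

end
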